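(* Let $f:\mathbb{R}^n\to(-\infty,+\infty]$ be a proper closed convex function, let $\mathcal{M}$ be a $C^1$-smooth embedded submanifold of $\mathbb{R}^n$ containing $\bar x$ (with the induced Riemannian metric), suppose $f$ is $C^1$-partly smooth around $\bar x$ relative to $\mathcal{M}$ and $g_{\mathcal{U}}(\bar x)\in\operatorname{ri}\partial f(\bar x)$. Then for all $x\in\mathcal{M}$ near $\bar x$, the Riemannian gradient of $f|_{\mathcal M}$ satisfies $\nabla_{\mathcal{M}}f(x)=g_{\mathcal{U}}(x)$.
   Context: Partial smoothness: $f$ is partly smooth at a point $x\in\mathcal M$ relative to a $C^p$ manifold $\mathcal{M}$ (for all subgradients) if: (Regularity) $\hat\partial f(z)=\partial f(z)\neq\varnothing$ for all $z\in\mathcal{M}$ near $x$; (Restricted smoothness) $f|_{\mathcal{M}}$ is $C^p$-smooth around $x$; (Sharpness) $\operatorname{par}\partial f(x)$ (the subspace parallel to the affine hull of $\partial f(x)$) equals the normal space $N_x\mathcal{M}$; (Inner semicontinuity) for every $y\in\partial f(x)$ and every sequence $x_r\to x$ in $\mathcal{M}$ there exist $y_r\in\partial f(x_r)$ with $y_r\to y$. "$C^1$-partly smooth around $\bar x$ relative to $\mathcal{M}$" means this holds with $p=1$ at every point of $\mathcal M$ near $\bar x$. For $g\in\partial f(x)$, $\mathcal{V}(x)=\operatorname{lin}(\partial f(x)-g)$, $\mathcal{U}(x)=\mathcal{V}(x)^\perp$, and the $\mathcal{U}$-gradient is $g_{\mathcal U}(x)=P_{\mathcal{U}(x)}(g)$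 (independent of $g\in\partial f(x)$). The Riemannian gradient $\nabla_{\mathcal M}f(x)\in T_x\mathcal M$ is $P_{T_x\mathcal M}\nabla\tilde f(x)$ for any local smooth extension $\tilde f$ of $f|_{\mathcal M}$. *)

theory Defs
  imports "HOL-Analysis.Analysis" "HOL-Library.Extended_Real"
begin

definition epigraph :: "('a \<Rightarrow> ereal) \<Rightarrow> ('a \<times> real) set" where
  "epigraph f = {(x, r). f x \<le> ereal r}"

definition proper_fun :: "('a \<Rightarrow> ereal) \<Rightarrow> bool" where
  "proper_fun f \<longleftrightarrow> (\<forall>x. f x \<noteq> -\<infinity>) \<and> (\<exists>x. f x \<noteq> \<infinity>)"

definition closed_fun :: "('a::real_normed_vector \<Rightarrow> ereal) \<Rightarrow> bool" where
  "closed_fun f \<longleftrightarrow> closed (epigraph f)"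

definition convex_fun :: "('a::real_vector \<Rightarrow> ereal) \<Rightarrow> bool" where
  "convex_fun f \<longleftrightarrow> convex (epigraph f)"

definition frechet_subdiff :: "('a::euclidean_space \<Rightarrow> ereal) \<Rightarrow> 'a \<Rightarrow> 'a set" where
  "frechet_subdiff f x = {y. \<bar>f x\<bar> \<noteq> \<infinity> \<and>
     (\<forall>e>0. \<exists>d>0. \<forall>z. norm (z - x) < d \<longrightarrow>
        f z \<ge> ereal (real_of_ereal (f x) + y \<bullet> (z - x) - e * norm (z - x)))}"

definition limiting_subdiff :: "('a::euclidean_space \<Rightarrow> ereal) \<Rightarrow> 'a \<Rightarrow> 'a set" where
  "limiting_subdiff f x = {y. \<bar>f x\<bar> \<noteq> \<infinity> \<and>
     (\<exists>xs ys. xs \<longlonglongrightarrow> x \<and> (\<lambda>k. f (xs k)) \<longlonglongrightarrow> f x \<and>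
        (\<forall>k. ys k \<in> frechet_subdiff f (xs k)) \<and> ys \<longlonglongrightarrow> y)}"

definition C1_on :: "'a::real_normed_vector set \<Rightarrow> ('a \<Rightarrow> 'b::real_normed_vector) \<Rightarrow> bool" where
  "C1_on U \<phi> \<longleftrightarrow> (\<exists>D :: 'a \<Rightarrow> 'a \<Rightarrow>\<^sub>L 'b.
      (\<forall>z\<in>U. (\<phi> has_derivative blinfun_apply (D z)) (at z)) \<and> continuous_on U D)"

definition C1_submanifold :: "'a::euclidean_space set \<Rightarrow> bool" where
  "C1_submanifold M \<longleftrightarrow> (\<forall>x\<in>M. \<exists>U V \<phi> \<psi> L.
      open U \<and> x \<in> U \<and> open V \<and> subspace L \<and>
      C1_on U (\<phi> :: 'a \<Rightarrow> 'a) \<and> C1_on V (\<psi> :: 'a \<Rightarrow> 'a) \<and> \<phi> ` U = V \<and>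
      (\<forall>z\<in>U. \<psi> (\<phi> z) = z) \<and> (\<forall>w\<in>V. \<phi> (\<psi> w) = w) \<and>
      \<phi> ` (M \<inter> U) = L \<inter> V)"

definition tangent_space :: "'a::euclidean_space set \<Rightarrow> 'a \<Rightarrow> 'a set" where
  "tangent_space M x = {v. \<exists>\<gamma> e. e > 0 \<and> \<gamma> 0 = x \<and> (\<forall>t. \<bar>t\<bar> < e \<longrightarrow> \<gamma> t \<in> M) \<and>
       (\<gamma> has_vector_derivative v) (at 0)}"

definition normal_space :: "'a::euclidean_space set \<Rightarrow> 'a \<Rightarrow> 'a set" where
  "normal_space M x = orthogonal_comp (tangent_space M x)"

text \<open>Subspace parallel to the affine hull of a set.\<close>
definition par :: "'a::euclidean_space set \<Rightarrow> 'a set" where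
  "par S = span {a - b | a b. a \<in> S \<and> b \<in> S}"

definition partly_smooth_at ::
  "('a::euclidean_space \<Rightarrow> ereal) \<Rightarrow> 'a set \<Rightarrow> 'a \<Rightarrow> bool" where
  "partly_smooth_at f M x \<longleftrightarrow>
     x \<in> M \<and>
     \<comment> \<open>Regularity\<close>
     (\<exists>W. open W \<and> x \<in> W \<and> (\<forall>z\<in>M \<inter> W.
         frechet_subdiff f z = limiting_subdiff f z \<and> limiting_subdiff f z \<noteq> {})) \<and>
     \<comment> \<open>Restricted smoothness (p = 1)\<close>
     (\<exists>U h. open U \<and> x \<in> U \<and> C1_on U (h :: 'a \<Rightarrow> real) \<and>
         (\<forall>z\<in>M \<inter> U. f z = ereal (h z))) \<and>
     \<comment> \<open>Sharpness\<close>
     par (limiting_subdiff f x) = normal_space M x \<and>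
     \<comment> \<open>Inner semicontinuity\<close>
     (\<forall>y\<in>limiting_subdiff f x. \<forall>xs. (\<forall>r. xs r \<in> M) \<longrightarrow> xs \<longlonglongrightarrow> x \<longrightarrow>
        (\<exists>ys. (\<forall>\<^sub>F r in sequentially. ys r \<in> limiting_subdiff f (xs r)) \<and> ys \<longlonglongrightarrow> y))"

definition C1_partly_smooth_around ::
  "('a::euclidean_space \<Rightarrow> ereal) \<Rightarrow> 'a set \<Rightarrow> 'a \<Rightarrow> bool" where
  "C1_partly_smooth_around f M xbar \<longleftrightarrow>
     (\<exists>W. open W \<and> xbar \<in> W \<and> (\<forall>x\<in>M \<inter> W. partly_smooth_at f M x))"

definition Vsp :: "('a::euclidean_space \<Rightarrow> ereal) \<Rightarrow> 'a \<Rightarrow> 'a set" where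
  "Vsp f x = span ((\<lambda>y. y - (SOME g. g \<in> limiting_subdiff f x)) ` limiting_subdiff f x)"

definition Usp :: "('a::euclidean_space \<Rightarrow> ereal) \<Rightarrow> 'a \<Rightarrow> 'a set" where
  "Usp f x = orthogonal_comp (Vsp f x)"

definition U_gradient :: "('a::euclidean_space \<Rightarrow> ereal) \<Rightarrow> 'a \<Rightarrow> 'a" where
  "U_gradient f x = closest_point (Usp f x) (SOME g. g \<in> limiting_subdiff f x)"

text \<open>gr is the Riemannian gradient of f restricted to M at x when gr is the
  tangent projection of the Euclidean gradient of some local C^1 extension.
  The conclusion below quantifies over every such extension.\<close>
definition riemannian_gradient_via ::
  "('a::euclidean_space \<Rightarrow> ereal) \<Rightarrow> 'a set \<Rightarrow> 'a \<Rightarrow> 'a set \<Rightarrow> ('a \<Rightarrow> real) \<Rightarrow> 'a \<Rightarrow> bool" where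
  "riemannian_gradient_via f M x U h gr \<longleftrightarrow>
     open U \<and> x \<in> U \<and> C1_on U h \<and> (\<forall>z\<in>M \<inter> U. f z = ereal (h z)) \<and>
     (\<exists>g. (h has_derivative (\<lambda>v. g \<bullet> v)) (at x) \<and> gr = closest_point (tangent_space M x) g)"

end

theory Submission
  imports Defs
begin

lemma vd_quot:
  fixes k :: "real \<Rightarrow> 'b::real_normed_vector"
  assumes "(k has_vector_derivative D) (at 0)"
  shows "((\<lambda>t. (1/t) *\<^sub>R (k t - k 0)) \<longlongrightarrow> D) (at 0)"
proof -
  have "((\<lambda>y. ((k y - k 0) - y *\<^sub>R D) /\<^sub>R norm (y - 0)) \<longlongrightarrow> 0) (at 0)"
    using assms unfolding has_vector_derivative_def has_derivative_at_within by simp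
  then have "((\<lambda>y. norm (((k y - k 0) - y *\<^sub>R D) /\<^sub>R norm (y - 0))) \<longlongrightarrow> 0) (at 0)"
    using tendsto_norm_zero by blast
  moreover have "eventually (\<lambda>y. norm (((k y - k 0) - y *\<^sub>R D) /\<^sub>R norm (y - 0))
      = norm ((1/y) *\<^sub>R (k y - k 0) - D)) (at 0)"
  proof -
    have "norm (((k y - k 0) - y *\<^sub>R D) /\<^sub>R norm (y - 0))
      = norm ((1/y) *\<^sub>R (k y - k 0) - D)" if "y \<noteq> 0" for y
    proof -
      have "(1/y) *\<^sub>R (k y - k 0) - D = (1/y) *\<^sub>R ((k y - k 0) - y *\<^sub>R D)"
        using that by (simp add: algebra_simps)
      moreover have "norm ((1/y) *\<^sub>R a) = norm a / \<bar>y\<bar>" for a :: 'b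
        by simp
      moreover have "norm (a /\<^sub>R norm (y - 0)) = norm a / \<bar>y\<bar>" for a :: 'b
        by (simp add: divide_inverse mult.commute)
      ultimately show ?thesis by simp
    qed
    note E = this
    show ?thesis unfolding eventually_at_filter
      by (rule always_eventually) (blast intro: E)
  qed
  ultimately have "((\<lambda>y. norm ((1/y) *\<^sub>R (k y - k 0) - D)) \<longlongrightarrow> 0) (at 0)"
    by (rule Lim_transform_eventually)
  then have "((\<lambda>y. (1/y) *\<^sub>R (k y - k 0) - D) \<longlongrightarrow> 0) (at 0)"
    using tendsto_norm_zero_iff by blast
  then show ?thesis using Lim_null by blast
qed

lemma onesided:
  fixes k :: "real \<Rightarrow> real"
  assumes "(k has_field_derivative c) (at 0)"
    and "\<And>e. e > 0 \<Longrightarrow> eventually (\<lambda>t. k t - k 0 \<ge> - e * t) (at_right 0)"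
  shows "c \<ge> 0"
proof (rule ccontr)
  assume "\<not> c \<ge> 0"
  then have ep: "-c/2 > 0" by simp
  have "((\<lambda>y. (k y - k 0) / (y - 0)) \<longlongrightarrow> c) (at 0)"
    using assms(1) has_field_derivative_iff by blast
  then have T: "((\<lambda>y. (k y - k 0) / (y - 0)) \<longlongrightarrow> c) (at_right 0)"
    using tendsto_within_subset by blast
  have "eventually (\<lambda>t. k t - k 0 \<ge> - (-c/2) * t \<and> t > 0) (at_right 0)"
    using eventually_conj[OF assms(2)[OF ep] eventually_at_right_less[of 0]] by simp
  then have ev: "eventually (\<lambda>t. -(-c/2) \<le> (k t - k 0) / (t - 0)) (at_right 0)"
    by eventually_elim (simp add: field_simps)
  have "-(-c/2) \<le> c" by (rule tendsto_lowerbound[OF T ev]) simp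
  then show False using \<open>\<not> c \<ge> 0\<close> by simp
qed

lemma closest_shift:
  fixes T :: "'a::euclidean_space set"
  assumes "subspace T" "g - g0 \<in> orthogonal_comp T"
  shows "closest_point T g = closest_point T g0"
proof -
  have cl: "closed T" using assms(1) closed_subspace by blast
  have ne: "T \<noteq> {}" using assms(1) subspace_0 by blast
  define p where "p = closest_point T g0"
  have pT: "p \<in> T" unfolding p_def using closest_point_in_set[OF cl ne] .
  have le: "\<forall>z\<in>T. dist g0 p \<le> dist g0 z" unfolding p_def using closest_point_le[OF cl] by blast
  define w where "w = g - g0"
  have wo: "z \<bullet> w = 0" if "z \<in> T" for z
    using assms(2) that unfolding w_def orthogonal_comp_def orthogonal_def by blast
  have sq: "(dist g z)^2 = (dist g0 z)^2 + 2 * (g0 \<bullet> w) + w \<bullet> w" if "z \<in> T" for z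
  proof -
    have "g - z = (g0 - z) + w" unfolding w_def by simp
    then have "(dist g z)^2 = (g0 - z + w) \<bullet> (g0 - z + w)"
      by (simp only: dist_norm power2_norm_eq_inner)
    also have "\<dots> = (g0 - z) \<bullet> (g0 - z) + 2 * (g0 \<bullet> w) - 2 * (z \<bullet> w) + w \<bullet> w"
      by (simp add: algebra_simps inner_commute)
    finally show ?thesis using wo[OF that] by (simp add: dist_norm power2_norm_eq_inner)
  qed
  have "\<forall>z\<in>T. dist g p \<le> dist g z"
  proof
    fix z assume "z \<in> T"
    have "(dist g0 p)^2 \<le> (dist g0 z)^2" using le \<open>z\<in>T\<close> by (simp add: power_mono)
    then have "(dist g p)^2 \<le> (dist g z)^2" using sq[OF pT] sq[OF \<open>z\<in>T\<close>] by simp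
    then show "dist g p \<le> dist g z" using power2_le_imp_le zero_le_dist by blast
  qed
  then have "p = closest_point T g"
    by (rule closest_point_unique[OF subspace_imp_convex[OF assms(1)] cl pT])
  then show ?thesis unfolding p_def by simp
qed


lemma tangent_subspace:
  fixes M :: "'a::euclidean_space set"
  assumes "C1_submanifold M" "x \<in> M"
  shows "subspace (tangent_space M x)"
proof -
  obtain U V L and \<phi> \<psi> :: "'a \<Rightarrow> 'a" where UV: "open U" "x \<in> U" "open V" "subspace L"
    "C1_on U \<phi>" "C1_on V \<psi>" "\<phi> ` U = V" "\<forall>z\<in>U. \<psi> (\<phi> z) = z" "\<forall>w\<in>V. \<phi> (\<psi> w) = w"
    "\<phi> ` (M \<inter> U) = L \<inter> V"
    using assms unfolding C1_submanifold_def by metis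
  obtain Dp :: "'a \<Rightarrow> 'a \<Rightarrow>\<^sub>L 'a" where Dp: "\<forall>z\<in>U. (\<phi> has_derivative blinfun_apply (Dp z)) (at z)"
    using UV(5) unfolding C1_on_def by blast
  obtain Dq :: "'a \<Rightarrow> 'a \<Rightarrow>\<^sub>L 'a" where Dq: "\<forall>z\<in>V. (\<psi> has_derivative blinfun_apply (Dq z)) (at z)"
    using UV(6) unfolding C1_on_def by blast
  define w where "w = \<phi> x"
  have wV: "w \<in> V" using UV(2,7) unfolding w_def by blast
  have wL: "w \<in> L" using UV(10) assms(2) UV(2) unfolding w_def by blast
  have xw: "\<psi> w = x" using UV(8) UV(2) unfolding w_def by blast
  define A where "A = blinfun_apply (Dp x)"
  define B where "B = blinfun_apply (Dq w)"
  have dA: "(\<phi> has_derivative A) (at x)" using Dp UV(2) unfolding A_def by blast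
  have dB: "(\<psi> has_derivative B) (at (\<phi> x))" using Dq wV unfolding B_def w_def by blast
  have "((\<psi> \<circ> \<phi>) has_derivative (B \<circ> A)) (at x)" by (rule diff_chain_at[OF dA dB])
  then have "(id has_derivative (B \<circ> A)) (at x)"
    by (rule has_derivative_transform_within_open[OF _ UV(1) UV(2)]) (simp add: UV(8))
  then have "B \<circ> A = id" using has_derivative_id has_derivative_unique by blast
  then have BA: "B (A v) = v" for v by (metis comp_apply id_apply)
  have linB: "linear B" unfolding B_def by (simp add: blinfun.bounded_linear_right bounded_linear.linear)
  have linA: "linear A" unfolding A_def by (simp add: blinfun.bounded_linear_right bounded_linear.linear)
  have "tangent_space M x = B ` L"
  proof
    show "tangent_space M x \<subseteq> B ` L"
    proof
      fix v assume "v \<in> tangent_space M x"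
      then obtain \<gamma> e where \<gamma>: "e > 0" "\<gamma> 0 = x" "\<forall>t. \<bar>t\<bar> < e \<longrightarrow> \<gamma> t \<in> M"
        "(\<gamma> has_vector_derivative v) (at 0)" unfolding tangent_space_def by blast
      have "continuous (at 0) \<gamma>" using has_vector_derivative_continuous[OF \<gamma>(4)] .
      then have "(\<gamma> \<longlongrightarrow> x) (at 0)" using \<gamma>(2) continuous_at by metis
      then have evU: "eventually (\<lambda>t. \<gamma> t \<in> U) (at 0)" using topological_tendstoD UV(1,2) by blast
      have eve: "eventually (\<lambda>t. \<bar>t\<bar> < e) (at 0)"
        unfolding eventually_at using \<gamma>(1) by (auto simp: dist_real_def intro!: exI[of _ e])
      have dg: "(\<gamma> has_derivative (\<lambda>t. t *\<^sub>R v)) (at 0)" using \<gamma>(4) has_vector_derivative_def by blast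
      have dA': "(\<phi> has_derivative A) (at (\<gamma> 0))" using dA \<gamma>(2) by simp
      have "((\<phi> \<circ> \<gamma>) has_derivative (A \<circ> (\<lambda>t. t *\<^sub>R v))) (at 0)" by (rule diff_chain_at[OF dg dA'])
      then have "((\<phi> \<circ> \<gamma>) has_vector_derivative A v) (at 0)"
        unfolding has_vector_derivative_def
        by (rule has_derivative_eq_rhs) (auto simp: linear_scale[OF linA])
      then have Q: "((\<lambda>t. (1/t) *\<^sub>R ((\<phi> \<circ> \<gamma>) t - (\<phi> \<circ> \<gamma>) 0)) \<longlongrightarrow> A v) (at 0)" by (rule vd_quot)
      have "eventually (\<lambda>t. (1/t) *\<^sub>R ((\<phi> \<circ> \<gamma>) t - (\<phi> \<circ> \<gamma>) 0) \<in> L) (at 0)"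
        using evU eve
      proof eventually_elim
        case (elim t)
        then have "\<gamma> t \<in> M \<inter> U" using \<gamma>(3) by blast
        then have "\<phi> (\<gamma> t) \<in> L" using UV(10) by blast
        moreover have "(\<phi> \<circ> \<gamma>) 0 \<in> L" using wL \<gamma>(2) unfolding w_def by simp
        ultimately show ?case using UV(4) by (simp add: subspace_diff subspace_scale)
      qed
      then have "A v \<in> L" using Lim_in_closed_set[OF closed_subspace[OF UV(4)] _ _ Q] by simp
      then show "v \<in> B ` L" using BA by (metis image_eqI)
    qed
  next
    show "B ` L \<subseteq> tangent_space M x"
    proof
      fix u assume "u \<in> B ` L"
      then obtain l where l: "l \<in> L" "u = B l" by blast
      obtain r where r: "r > 0" "ball w r \<subseteq> V" using UV(3) wV open_contains_ball by blast
      define e where "e = r / (norm l + 1)"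
      have nl: "norm l + 1 > 0" using norm_ge_zero[of l] by linarith
      have e: "e > 0" unfolding e_def using r(1) nl by (intro divide_pos_pos)
      define \<gamma> where "\<gamma> = (\<lambda>t. \<psi> (w + t *\<^sub>R l))"
      have "\<gamma> t \<in> M" if "\<bar>t\<bar> < e" for t
      proof -
        have "\<bar>t\<bar> * norm l \<le> \<bar>t\<bar> * (norm l + 1)" by (simp add: mult_left_mono)
        also have "\<dots> < e * (norm l + 1)"
          using that nl by (intro mult_strict_right_mono) auto
        also have "\<dots> = r" unfolding e_def using nl by simp
        finally have "norm (t *\<^sub>R l) < r" by simp
        then have "w + t *\<^sub>R l \<in> V" using r(2) by (auto simp: dist_norm)
        moreover have "w + t *\<^sub>R l \<in> L" using wL l(1) UV(4) by (simp add: subspace_add subspace_scale)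
        ultimately have "w + t *\<^sub>R l \<in> \<phi> ` (M \<inter> U)" using UV(10) by blast
        then obtain z where z: "w + t *\<^sub>R l = \<phi> z" "z \<in> M \<inter> U" by (rule imageE)
        have "\<gamma> t = z" unfolding \<gamma>_def using z UV(8) by simp
        then show ?thesis using z(2) by simp
      qed
      moreover have "\<gamma> 0 = x" unfolding \<gamma>_def using xw by simp
      moreover have "(\<gamma> has_vector_derivative u) (at 0)"
      proof -
        have d1: "((\<lambda>t. w + t *\<^sub>R l) has_derivative (\<lambda>t. t *\<^sub>R l)) (at 0)"
          by (auto intro!: derivative_eq_intros)
        have d2: "(\<psi> has_derivative B) (at ((\<lambda>t. w + t *\<^sub>R l) 0))" using dB unfolding w_def by simp
        have "((\<psi> \<circ> (\<lambda>t. w + t *\<^sub>R l)) has_derivative (B \<circ> (\<lambda>t. t *\<^sub>R l))) (at 0)"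
          by (rule diff_chain_at[OF d1 d2])
        moreover have eqf: "\<psi> \<circ> (\<lambda>t. w + t *\<^sub>R l) = \<gamma>" unfolding \<gamma>_def comp_def ..
        moreover have eqd: "B \<circ> (\<lambda>t. t *\<^sub>R l) = (\<lambda>t. t *\<^sub>R u)"
          using l(2) linear_scale[OF linB] by (auto simp: comp_def)
        ultimately show ?thesis unfolding has_vector_derivative_def by simp
      qed
      ultimately show "u \<in> tangent_space M x" unfolding tangent_space_def using e by blast
    qed
  qed
  then show ?thesis using linear_subspace_image[OF linB UV(4)] by simp
qed


lemma tangent_ineq:
  fixes f :: "'a::euclidean_space \<Rightarrow> ereal"
  assumes g0: "g0 \<in> frechet_subdiff f x" and U: "open U" "x \<in> U"
    and fh: "\<forall>z\<in>M \<inter> U. f z = ereal (h z)"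
    and dh: "(h has_derivative (\<lambda>u. g \<bullet> u)) (at x)" and v: "v \<in> tangent_space M x"
  shows "(g - g0) \<bullet> v \<ge> 0"
proof -
  obtain \<gamma> e where \<gamma>: "e > 0" "\<gamma> 0 = x" "\<forall>t. \<bar>t\<bar> < e \<longrightarrow> \<gamma> t \<in> M"
    "(\<gamma> has_vector_derivative v) (at 0)" using v unfolding tangent_space_def by blast
  have xM: "x \<in> M" using \<gamma>(1-3) by force
  have fx: "f x = ereal (h x)" using fh xM U(2) by blast
  define k where "k = (\<lambda>t. h (\<gamma> t) - g0 \<bullet> \<gamma> t)"
  have dg: "(\<gamma> has_derivative (\<lambda>t. t *\<^sub>R v)) (at 0)" using \<gamma>(4) has_vector_derivative_def by blast
  have dh': "(h has_derivative (\<lambda>u. g \<bullet> u)) (at (\<gamma> 0))" using dh \<gamma>(2) by simp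
  have d1: "((h \<circ> \<gamma>) has_derivative ((\<lambda>u. g \<bullet> u) \<circ> (\<lambda>t. t *\<^sub>R v))) (at 0)"
    by (rule diff_chain_at[OF dg dh'])
  have d2: "((\<lambda>t. g0 \<bullet> \<gamma> t) has_derivative (\<lambda>t. g0 \<bullet> (t *\<^sub>R v))) (at 0)"
    using bounded_linear.has_derivative[OF bounded_linear_inner_right dg] .
  have "((\<lambda>t. (h \<circ> \<gamma>) t - g0 \<bullet> \<gamma> t) has_derivative
      (\<lambda>t. ((\<lambda>u. g \<bullet> u) \<circ> (\<lambda>t. t *\<^sub>R v)) t - g0 \<bullet> (t *\<^sub>R v))) (at 0)"
    by (rule has_derivative_diff[OF d1 d2])
  moreover have eqk: "(\<lambda>t. (h \<circ> \<gamma>) t - g0 \<bullet> \<gamma> t) = k" unfolding k_def comp_def ..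
  moreover have eqd: "(\<lambda>t. ((\<lambda>u. g \<bullet> u) \<circ> (\<lambda>t. t *\<^sub>R v)) t - g0 \<bullet> (t *\<^sub>R v))
      = (*) ((g - g0) \<bullet> v)"
    by (rule ext) (simp add: algebra_simps inner_diff_left)
  ultimately have "(k has_derivative (*) ((g - g0) \<bullet> v)) (at 0)" by simp
  then have dk: "(k has_field_derivative ((g - g0) \<bullet> v)) (at 0)"
    by (simp add: has_field_derivative_def)
  show ?thesis
  proof (rule onesided[OF dk])
    fix \<epsilon> :: real assume "\<epsilon> > 0"
    have nv: "norm v + 1 > 0" using norm_ge_zero[of v] by linarith
    define \<epsilon>' where "\<epsilon>' = \<epsilon> / (norm v + 1)"
    have \<epsilon>': "\<epsilon>' > 0" unfolding \<epsilon>'_def using \<open>\<epsilon> > 0\<close> nv by (intro divide_pos_pos)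
    obtain d where d: "d > 0" and fr: "\<forall>z. norm (z - x) < d \<longrightarrow>
        f z \<ge> ereal (real_of_ereal (f x) + g0 \<bullet> (z - x) - \<epsilon>' * norm (z - x))"
      using g0 \<epsilon>' unfolding frechet_subdiff_def mem_Collect_eq by blast
    have "continuous (at 0) \<gamma>" using has_vector_derivative_continuous[OF \<gamma>(4)] .
    then have lim: "(\<gamma> \<longlongrightarrow> x) (at 0)" using \<gamma>(2) continuous_at by metis
    then have evU: "eventually (\<lambda>t. \<gamma> t \<in> U) (at 0)" using topological_tendstoD U by blast
    have evd: "eventually (\<lambda>t. \<gamma> t \<in> ball x d) (at 0)"
      using topological_tendstoD[OF lim, of "ball x d"] d by simp
    have eve: "eventually (\<lambda>t. \<bar>t\<bar> < e) (at 0)"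
      unfolding eventually_at using \<gamma>(1) by (auto simp: dist_real_def intro!: exI[of _ e])
    have Q: "((\<lambda>t. (1/t) *\<^sub>R (\<gamma> t - \<gamma> 0)) \<longlongrightarrow> v) (at 0)" by (rule vd_quot[OF \<gamma>(4)])
    then have "((\<lambda>t. norm ((1/t) *\<^sub>R (\<gamma> t - \<gamma> 0))) \<longlongrightarrow> norm v) (at 0)" by (rule tendsto_norm)
    then have evq: "eventually (\<lambda>t. norm ((1/t) *\<^sub>R (\<gamma> t - \<gamma> 0)) < norm v + 1) (at 0)"
      using order_tendstoD(2) by force
    have "eventually (\<lambda>t. \<gamma> t \<in> U \<and> \<gamma> t \<in> ball x d \<and> \<bar>t\<bar> < e \<and>
        norm ((1/t) *\<^sub>R (\<gamma> t - \<gamma> 0)) < norm v + 1) (at 0)"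
      using evU evd eve evq by eventually_elim blast
    then have ev1: "eventually (\<lambda>t. \<gamma> t \<in> U \<and> \<gamma> t \<in> ball x d \<and> \<bar>t\<bar> < e \<and>
        norm ((1/t) *\<^sub>R (\<gamma> t - \<gamma> 0)) < norm v + 1) (at_right 0)"
      by (rule filter_leD[OF at_le, rotated]) simp
    show "eventually (\<lambda>t. k t - k 0 \<ge> - \<epsilon> * t) (at_right 0)"
      using eventually_conj[OF ev1 eventually_at_right_less[of 0]]
    proof eventually_elim
      case (elim t)
      then have t: "t > 0" "\<gamma> t \<in> U" "norm (\<gamma> t - x) < d" "\<gamma> t \<in> M"
        "norm ((1/t) *\<^sub>R (\<gamma> t - x)) < norm v + 1"
        using \<gamma>(2,3) by (auto simp: dist_norm norm_minus_commute)
      have "f (\<gamma> t) = ereal (h (\<gamma> t))" using fh t(2,4) by blast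
      then have "ereal (h (\<gamma> t)) \<ge> ereal (h x + g0 \<bullet> (\<gamma> t - x) - \<epsilon>' * norm (\<gamma> t - x))"
        using fr t(3) fx by auto
      then have I1: "h (\<gamma> t) \<ge> h x + g0 \<bullet> (\<gamma> t - x) - \<epsilon>' * norm (\<gamma> t - x)" by simp
      have "norm ((1/t) *\<^sub>R (\<gamma> t - x)) = norm (\<gamma> t - x) / t" using t(1) by simp
      then have "norm (\<gamma> t - x) < (norm v + 1) * t" using t(1,5) by (simp add: divide_less_eq)
      then have "\<epsilon>' * norm (\<gamma> t - x) \<le> \<epsilon>' * ((norm v + 1) * t)"
        using \<epsilon>' by (intro mult_left_mono) auto
      also have "\<dots> = \<epsilon> * t" unfolding \<epsilon>'_def using nv by simp
      finally have I2: "\<epsilon>' * norm (\<gamma> t - x) \<le> \<epsilon> * t" .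
      have "k t - k 0 = h (\<gamma> t) - h x - g0 \<bullet> (\<gamma> t - x)"
        unfolding k_def using \<gamma>(2) by (simp add: inner_diff_right)
      then show ?case using I1 I2 by linarith
    qed
  qed
qed


theorem proposition4:
  fixes f :: "'a::euclidean_space \<Rightarrow> ereal" and M :: "'a set" and xbar :: 'a
  assumes "proper_fun f" and "closed_fun f" and "convex_fun f"
    and "C1_submanifold M" and "xbar \<in> M"
    and "C1_partly_smooth_around f M xbar"
    and "U_gradient f xbar \<in> rel_interior (limiting_subdiff f xbar)"
  shows "\<exists>W. open W \<and> xbar \<in> W \<and>
           (\<forall>x\<in>M \<inter> W. \<forall>U h gr. riemannian_gradient_via f M x U h gr \<longrightarrow>
               gr = U_gradient f x)"
proof -
  obtain W where W: "open W" "xbar \<in> W" "\<forall>x\<in>M \<inter> W. partly_smooth_at f M x"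
    using assms(6) unfolding C1_partly_smooth_around_def by blast
  show ?thesis
  proof (intro exI[of _ W] conjI ballI allI impI)
    show "open W" "xbar \<in> W" using W by auto
  next
    fix x U h gr
    assume x: "x \<in> M \<inter> W" and rg: "riemannian_gradient_via f M x U h gr"
    have ps: "partly_smooth_at f M x" using W(3) x by blast
    then obtain W' where W': "x \<in> W'" "\<forall>z\<in>M \<inter> W'. frechet_subdiff f z = limiting_subdiff f z
        \<and> limiting_subdiff f z \<noteq> {}"
      and sharp: "par (limiting_subdiff f x) = normal_space M x"
      unfolding partly_smooth_at_def by blast
    have reg: "frechet_subdiff f x = limiting_subdiff f x" "limiting_subdiff f x \<noteq> {}"
      using W' x by auto
    define S where "S = limiting_subdiff f x"
    define g0 where "g0 = (SOME g. g \<in> S)"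
    have g0S: "g0 \<in> S" unfolding g0_def using reg(2) unfolding S_def by (simp add: some_in_eq)
    have g0F: "g0 \<in> frechet_subdiff f x" using g0S reg(1) unfolding S_def by simp
    obtain g where U: "open U" "x \<in> U" and fh: "\<forall>z\<in>M \<inter> U. f z = ereal (h z)"
      and dh: "(h has_derivative (\<lambda>v. g \<bullet> v)) (at x)"
      and gr: "gr = closest_point (tangent_space M x) g"
      using rg unfolding riemannian_gradient_via_def by blast
    define T where "T = tangent_space M x"
    have sT: "subspace T" unfolding T_def using tangent_subspace[OF assms(4)] x by blast
    have ineq: "(g - g0) \<bullet> v \<ge> 0" if "v \<in> T" for v
      using tangent_ineq[OF g0F U fh dh] that unfolding T_def by blast
    have orth: "g - g0 \<in> orthogonal_comp T"
      unfolding orthogonal_comp_def orthogonal_def mem_Collect_eq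
    proof
      fix v assume "v \<in> T"
      then have "-v \<in> T" using sT subspace_neg by blast
      have "(g - g0) \<bullet> v \<ge> 0" using ineq \<open>v \<in> T\<close> .
      moreover have "(g - g0) \<bullet> (-v) \<ge> 0" using ineq \<open>-v \<in> T\<close> .
      ultimately show "v \<bullet> (g - g0) = 0" by (simp add: inner_commute)
    qed
    have Vsp: "Vsp f x = par S"
      unfolding Vsp_def par_def g0_def[symmetric] S_def[symmetric]
    proof (rule iffD2[OF span_eq], rule conjI)
      show "(\<lambda>y. y - g0) ` S \<subseteq> span {a - b |a b. a \<in> S \<and> b \<in> S}"
        using g0S by (auto intro!: span_base)
      show "{a - b |a b. a \<in> S \<and> b \<in> S} \<subseteq> span ((\<lambda>y. y - g0) ` S)"
      proof
        fix y assume "y \<in> {a - b |a b. a \<in> S \<and> b \<in> S}"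
        then obtain a b where ab: "a \<in> S" "b \<in> S" "y = a - b" by blast
        have "a - g0 \<in> span ((\<lambda>y. y - g0) ` S)" using ab(1) by (auto intro!: span_base)
        moreover have "b - g0 \<in> span ((\<lambda>y. y - g0) ` S)" using ab(2) by (auto intro!: span_base)
        ultimately have "(a - g0) - (b - g0) \<in> span ((\<lambda>y. y - g0) ` S)" by (rule span_diff)
        then show "y \<in> span ((\<lambda>y. y - g0) ` S)" using ab(3) by simp
      qed
    qed
    have Usp: "Usp f x = T"
      unfolding Usp_def Vsp using sharp orthogonal_comp_self[OF sT]
      unfolding S_def normal_space_def T_def by simp
    have "U_gradient f x = closest_point T g0"
      unfolding U_gradient_def g0_def S_def Usp[symmetric] ..
    also have "\<dots> = closest_point T g" using closest_shift[OF sT orth] by simp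
    finally show "gr = U_gradient f x" using gr unfolding T_def by simp
  qed
qed

end
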